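(* Let $q\neq-1$ be real and let $n,m\ge0$ be integers. Then $$\sum_{k=0}^{n}(-1)^kq^{\binom{k}{2}}\begin{bmatrix} n\\ k\end{bmatrix}\prod_{j=n+m+1-k}^{n+m}(1+q^j)\;U_{2n+m-1-k}(1,s,q)=q^{n^2-n+mn}s^n\,U_{m-1}(1,s,q).$$
   Context: $U_{-1}=0$, $U_0=1$, $U_n(x,s,q)=(1+q^{n})x\,U_{n-1}(x,s,q)+q^{n-1}s\,U_{n-2}(x,s,q)$ for $n\ge1$; $U_n(1,s,q)$ is its value at $x=1$. Notation: $[m]=1+q+\cdots+q^{m-1}$, $[m]!=[1]\cdots[m]$, $\begin{bmatrix} m\\ j\end{bmatrix}=\frac{[m]!}{[j]![m-j]!}$; empty products equal $1$. *)

theory Defs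
  imports Complex_Main
begin

text \<open>Shifted sequence: Ush n = U_(n-1), so Ush 0 = U_(-1) = 0, Ush 1 = U_0 = 1.\<close>
fun Ush :: "nat \<Rightarrow> real \<Rightarrow> real \<Rightarrow> real \<Rightarrow> real" where
  "Ush 0 x s q = 0"
| "Ush (Suc 0) x s q = 1"
| "Ush (Suc (Suc n)) x s q =
     (1 + q ^ (Suc n)) * x * Ush (Suc n) x s q + q ^ n * s * Ush n x s q"

text \<open>U_n(x,s,q) for integer n \<ge> -1 (value 0 for n < -1 is an irrelevant convention).\<close>
definition U :: "int \<Rightarrow> real \<Rightarrow> real \<Rightarrow> real \<Rightarrow> real" where
  "U n x s q = (if n < -1 then 0 else Ush (nat (n + 1)) x s q)"

definition qint :: "real \<Rightarrow> nat \<Rightarrow> real" where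
  "qint q m = (\<Sum>i<m. q ^ i)"

definition qfact :: "real \<Rightarrow> nat \<Rightarrow> real" where
  "qfact q m = (\<Prod>i=1..m. qint q i)"

definition qbinom :: "real \<Rightarrow> nat \<Rightarrow> nat \<Rightarrow> real" where
  "qbinom q m j = qfact q m / (qfact q j * qfact q (m - j))"

end

theory Submission
  imports Defs
begin

fun gb :: "real \<Rightarrow> nat \<Rightarrow> nat \<Rightarrow> real" where
  "gb q 0 0 = 1"
| "gb q 0 (Suc k) = 0"
| "gb q (Suc n) 0 = 1"
| "gb q (Suc n) (Suc k) = gb q n k + q ^ Suc k * gb q n (Suc k)"

lemma gb_zero: "n < k \<Longrightarrow> gb q n k = 0"
proof (induction n arbitrary: k)
  case 0 then show ?case by (cases k) auto
next
  case (Suc n) then show ?case by (cases k) auto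
qed

lemma qint_add: "qint q (a + b) = qint q a + q ^ a * qint q b"
proof (induction b)
  case 0 then show ?case by (simp add: qint_def)
next
  case (Suc b) then show ?case
    by (simp add: qint_def power_add algebra_simps)
qed

lemma qint_Suc: "qint q (Suc m) = qint q m + q ^ m"
  by (simp add: qint_def)

lemma qfact_Suc: "qfact q (Suc m) = qfact q m * qint q (Suc m)"
  by (simp add: qfact_def prod.cl_ivl_Suc)

lemma qfact_0: "qfact q 0 = 1"
  by (simp add: qfact_def)

lemma qint_mult: "(q - 1) * qint q m = q ^ m - 1"
  by (induction m) (auto simp: qint_def algebra_simps)

lemma qint_nz:
  assumes "q \<noteq> -1" "m > 0" shows "qint q m \<noteq> 0"
proof
  assume h: "qint q m = 0"
  show False
  proof (cases "q = 1")
    case True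
    then show False using h assms by (simp add: qint_def)
  next
    case False
    have "q ^ m = 1" using qint_mult[of q m] h by simp
    then have "\<bar>q\<bar> ^ m = 1" by (metis power_abs abs_one)
    then have "\<bar>q\<bar> = 1" using assms(2)
      by (metis abs_ge_zero power_eq_imp_eq_base power_one zero_le_one)
    then show False using False assms(1) by (auto simp: abs_if split: if_splits)
  qed
qed

lemma qfact_nz: "q \<noteq> -1 \<Longrightarrow> qfact q m \<noteq> 0"
  by (induction m) (auto simp: qfact_0 qfact_Suc qint_nz)

lemma gb_fact: "k \<le> n \<Longrightarrow> gb q n k * qfact q k * qfact q (n - k) = qfact q n"
proof (induction n arbitrary: k)
  case 0 then show ?case by (simp add: qfact_0)
next
  case (Suc n)
  show ?case
  proof (cases k)
    case 0 then show ?thesis by (simp add: qfact_0)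
  next
    case (Suc j)
    then have jn: "j \<le> n" using Suc.prems by simp
    have A: "gb q n j * qfact q (Suc j) * qfact q (n - j) = qint q (Suc j) * qfact q n"
      using Suc.IH[OF jn] by (simp add: qfact_Suc algebra_simps)
    have B: "gb q n (Suc j) * qfact q (Suc j) * qfact q (n - j) = qint q (n - j) * qfact q n"
    proof (cases "j < n")
      case True
      have "n - j = Suc (n - Suc j)" using True by simp
      then have "qfact q (n - j) = qfact q (n - Suc j) * qint q (n - j)"
        by (simp add: qfact_Suc)
      then show ?thesis using Suc.IH[of "Suc j"] True by (simp add: algebra_simps)
    next
      case False
      then have "j = n" using jn by simp
      then show ?thesis by (simp add: gb_zero qint_def)
    qed
    have C: "qint q (Suc j) + q ^ Suc j * qint q (n - j) = qint q (Suc n)"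
      using qint_add[of q "Suc j" "n - j"] jn by simp
    have "gb q (Suc n) k * qfact q k * qfact q (Suc n - k)
        = gb q n j * qfact q (Suc j) * qfact q (n - j)
          + q ^ Suc j * (gb q n (Suc j) * qfact q (Suc j) * qfact q (n - j))"
      using Suc by (simp add: algebra_simps)
    also have "\<dots> = (qint q (Suc j) + q ^ Suc j * qint q (n - j)) * qfact q n"
      using A B by (simp add: algebra_simps)
    also have "\<dots> = qfact q (Suc n)" using C by (simp add: qfact_Suc)
    finally show ?thesis .
  qed
qed

lemma qbinom_gb: "q \<noteq> -1 \<Longrightarrow> k \<le> n \<Longrightarrow> qbinom q n k = gb q n k"
  using gb_fact[of k n q] qfact_nz[of q]
  by (simp add: qbinom_def field_simps)

lemma gb_shift:
  assumes "q \<noteq> -1"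
  shows "(q ^ Suc j - 1) * gb q (Suc p) (Suc j) = (q ^ Suc p - 1) * gb q p j"
proof (cases "j \<le> p")
  case False then show ?thesis by (simp add: gb_zero)
next
  case True
  have nz: "qfact q j * qfact q (p - j) \<noteq> 0" using qfact_nz[OF assms] by simp
  have "(q ^ Suc j - 1) * gb q (Suc p) (Suc j) * (qfact q j * qfact q (p - j))
      = (q - 1) * (gb q (Suc p) (Suc j) * qfact q (Suc j) * qfact q (Suc p - Suc j))"
  proof -
    have h1: "(q - 1) * (gb q (Suc p) (Suc j) * qfact q (Suc j) * qfact q (Suc p - Suc j))
       = ((q - 1) * qint q (Suc j)) * gb q (Suc p) (Suc j) * (qfact q j * qfact q (p - j))"
      by (simp only: qfact_Suc diff_Suc_Suc mult_ac)
    have h2: "((q - 1) * qint q (Suc j)) * gb q (Suc p) (Suc j) * (qfact q j * qfact q (p - j))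
       = (q ^ Suc j - 1) * gb q (Suc p) (Suc j) * (qfact q j * qfact q (p - j))"
      by (simp only: qint_mult)
    show ?thesis by (simp only: h1 h2)
  qed
  also have "\<dots> = (q - 1) * qfact q (Suc p)" using gb_fact[of "Suc j" "Suc p" q] True by simp
  also have "\<dots> = (q - 1) * qint q (Suc p) * qfact q p" by (simp add: qfact_Suc)
  also have "\<dots> = (q ^ Suc p - 1) * qfact q p" using qint_mult[of q "Suc p"] by simp
  also have "\<dots> = (q ^ Suc p - 1) * gb q p j * (qfact q j * qfact q (p - j))"
    using gb_fact[of j p q] True by (simp add: algebra_simps)
  finally show ?thesis using nz by simp
qed


definition uu :: "real \<Rightarrow> real \<Rightarrow> nat \<Rightarrow> real" where
  "uu s q j = Ush j 1 s q"

definition PP :: "real \<Rightarrow> nat \<Rightarrow> nat \<Rightarrow> real" where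
  "PP q N k = (\<Prod>i<k. 1 + q ^ (N - i))"

definition TT :: "real \<Rightarrow> real \<Rightarrow> nat \<Rightarrow> nat \<Rightarrow> nat \<Rightarrow> real" where
  "TT s q n N r = (\<Sum>k\<le>n. (-1) ^ k * q ^ (k choose 2) * gb q n k * PP q N k * uu s q (r - k))"

lemma uu_rec: "uu s q (Suc (Suc t)) = (1 + q ^ Suc t) * uu s q (Suc t) + q ^ t * s * uu s q t"
  by (simp add: uu_def)

lemma choose2_Suc: "Suc k choose 2 = (k choose 2) + k"
  by (simp add: numeral_2_eq_2)

lemma PP_Suc: "PP q N (Suc k) = PP q N k * (1 + q ^ (N - k))"
  by (simp add: PP_def)

lemma PP_0: "PP q N 0 = 1"
  by (simp add: PP_def)

lemma PP_Suc_Suc: "PP q (Suc M) (Suc k) = (1 + q ^ Suc M) * PP q M k"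
  unfolding PP_def by (subst prod.lessThan_Suc_shift) simp

lemma TT_0: "TT s q 0 N r = uu s q r"
  by (simp add: TT_def PP_0 numeral_2_eq_2)

lemma gb_0: "gb q n 0 = 1"
  by (cases n) auto

lemma R1:
  assumes r: "r \<ge> n + 2" and N: "N \<ge> n"
  shows "TT s q (Suc n) N r = (q ^ (r - 1) - q ^ N) * TT s q n N (r - 1)
           + s * q ^ (r - 2) * TT s q n N (r - 2)"
proof -
  define c where "c k = (-1) ^ k * q ^ (k choose 2) * gb q n k * PP q N k" for k
  define g where "g k = c k * q ^ k * uu s q (r - k)" for k
  define A where "A k = (-1) ^ (Suc k) * q ^ (Suc k choose 2) * gb q n k * PP q N (Suc k) * uu s q (r - Suc k)" for k
  have "TT s q (Suc n) N r = (-1) ^ 0 * q ^ (0 choose 2) * gb q (Suc n) 0 * PP q N 0 * uu s q (r - 0)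
      + (\<Sum>k\<le>n. (-1) ^ Suc k * q ^ (Suc k choose 2) * gb q (Suc n) (Suc k) * PP q N (Suc k) * uu s q (r - Suc k))"
    unfolding TT_def by (subst sum.atMost_Suc_shift) simp
  also have "\<dots> = g 0 + (\<Sum>k\<le>n. A k + g (Suc k))"
    by (rule arg_cong2[where f="(+)"])
       (auto simp: g_def c_def A_def PP_0 gb_0 numeral_2_eq_2 choose2_Suc algebra_simps intro!: sum.cong)
  also have "\<dots> = (\<Sum>k\<le>n. A k) + (\<Sum>k\<le>Suc n. g k)"
    by (simp only: sum.distrib sum.atMost_Suc_shift[of g n] add_ac)
  also have "(\<Sum>k\<le>Suc n. g k) = (\<Sum>k\<le>n. g k)"
    by (simp add: g_def c_def gb_zero)
  also have "(\<Sum>k\<le>n. A k) + (\<Sum>k\<le>n. g k) = (\<Sum>k\<le>n. A k + g k)"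
    by (simp add: sum.distrib)
  also have "\<dots> = (\<Sum>k\<le>n. (q ^ (r - 1) - q ^ N) * (c k * uu s q (r - 1 - k))
                   + s * q ^ (r - 2) * (c k * uu s q (r - 2 - k)))"
  proof (rule sum.cong)
    fix k assume "k \<in> {..n}"
    then have k: "k \<le> n" by simp
    define t where "t = r - k - 2"
    have t: "r = t + k + 2" using r k by (simp add: t_def)
    define d where "d = N - k"
    have d: "N = k + d" using N k by (simp add: d_def)
    have e1: "r - k = Suc (Suc t)" "r - Suc k = Suc t" "r - 1 - k = Suc t" "r - 2 - k = t"
      "r - 1 = Suc (t + k)" "r - 2 = t + k" "N - k = d" using t d by auto
    show "A k + g k = (q ^ (r - 1) - q ^ N) * (c k * uu s q (r - 1 - k))
                   + s * q ^ (r - 2) * (c k * uu s q (r - 2 - k))"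
      unfolding A_def g_def c_def e1 uu_rec PP_Suc choose2_Suc d
      by (simp add: power_add algebra_simps)
  qed simp
  also have "\<dots> = (q ^ (r - 1) - q ^ N) * TT s q n N (r - 1)
           + s * q ^ (r - 2) * TT s q n N (r - 2)"
  proof -
    have a: "(q ^ (r - 1) - q ^ N) * TT s q n N (r - 1) = (\<Sum>k\<le>n. (q ^ (r - 1) - q ^ N) * (c k * uu s q (r - 1 - k)))"
      unfolding TT_def c_def sum_distrib_left by (simp add: mult_ac)
    have b: "s * q ^ (r - 2) * TT s q n N (r - 2) = (\<Sum>k\<le>n. s * q ^ (r - 2) * (c k * uu s q (r - 2 - k)))"
      unfolding TT_def c_def sum_distrib_left by (simp add: mult_ac)
    show ?thesis unfolding a b by (rule sum.distrib)
  qed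
  finally show ?thesis .
qed


lemma Dlem:
  assumes q: "q \<noteq> -1" and pM: "Suc p \<le> M"
  shows "TT s q (Suc p) (Suc M) r - TT s q (Suc p) M r
       = - (q ^ Suc p - 1) * q ^ M * TT s q p M (r - 1)"
proof -
  define f where "f N k = (-1) ^ k * q ^ (k choose 2) * gb q (Suc p) k * PP q N k * uu s q (r - k)" for N k
  have "TT s q (Suc p) (Suc M) r - TT s q (Suc p) M r = (\<Sum>k\<le>Suc p. f (Suc M) k - f M k)"
    unfolding TT_def f_def by (simp add: sum_subtractf)
  also have "\<dots> = (f (Suc M) 0 - f M 0) + (\<Sum>j\<le>p. f (Suc M) (Suc j) - f M (Suc j))"
    by (rule sum.atMost_Suc_shift)
  also have "f (Suc M) 0 - f M 0 = 0" by (simp add: f_def PP_0)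
  also have "(\<Sum>j\<le>p. f (Suc M) (Suc j) - f M (Suc j))
      = (\<Sum>j\<le>p. - (q ^ Suc p - 1) * q ^ M * ((-1) ^ j * q ^ (j choose 2) * gb q p j * PP q M j * uu s q (r - 1 - j)))"
  proof (rule sum.cong)
    fix j assume "j \<in> {..p}"
    then have j: "j \<le> p" by simp
    define e where "e = M - j"
    have e: "M = j + e" using j pM by (simp add: e_def)
    define G where "G = gb q (Suc p) (Suc j)"
    have hG: "(q ^ Suc j - 1) * G = (q ^ Suc p - 1) * gb q p j"
      unfolding G_def by (rule gb_shift[OF q])
    have P1: "PP q M (Suc j) = PP q M j * (1 + q ^ e)" using e by (simp add: PP_Suc)
    have X: "r - Suc j = r - 1 - j" by simp
    have "f (Suc M) (Suc j) - f M (Suc j)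
        = (-1) ^ Suc j * q ^ ((j choose 2) + j) * G * PP q M j * uu s q (r - 1 - j) * (q ^ Suc M - q ^ e)"
      unfolding f_def PP_Suc_Suc P1 choose2_Suc G_def X by (simp add: algebra_simps)
    also have "q ^ Suc M - q ^ e = q ^ e * (q ^ Suc j - 1)"
      using e by (simp add: power_add algebra_simps)
    also have "(-1) ^ Suc j * q ^ ((j choose 2) + j) * G * PP q M j * uu s q (r - 1 - j) * (q ^ e * (q ^ Suc j - 1))
        = - ((-1) ^ j * q ^ (j choose 2) * q ^ (j + e) * PP q M j * uu s q (r - 1 - j)) * ((q ^ Suc j - 1) * G)"
      by (simp add: power_add algebra_simps)
    also have "\<dots> = - (q ^ Suc p - 1) * q ^ M * ((-1) ^ j * q ^ (j choose 2) * gb q p j * PP q M j * uu s q (r - 1 - j))"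
      unfolding hG e by (simp add: algebra_simps)
    finally show "f (Suc M) (Suc j) - f M (Suc j) = - (q ^ Suc p - 1) * q ^ M * ((-1) ^ j * q ^ (j choose 2) * gb q p j * PP q M j * uu s q (r - 1 - j))" .
  qed simp
  also have "\<dots> = - (q ^ Suc p - 1) * q ^ M * TT s q p M (r - 1)"
    unfolding TT_def sum_distrib_left by simp
  finally show ?thesis by simp
qed

lemma Claim:
  assumes q: "q \<noteq> -1"
  shows "1 \<le> n \<Longrightarrow> n \<le> N \<Longrightarrow> TT s q n N (N + n) = s * q ^ (N + n - 2) * TT s q (n - 1) (N - 1) (N + n - 2)"
proof (induction n arbitrary: N rule: less_induct)
  case (less n)
  show ?case
  proof (cases "n = 1")
    case True
    then have "TT s q n N (N + n) = (q ^ N - q ^ N) * TT s q 0 N N + s * q ^ (N - 1) * TT s q 0 N (N - 1)"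
      using R1[of 0 "N + 1" N s q] less.prems by simp
    then show ?thesis using True by (simp add: TT_0)
  next
    case False
    then obtain p where n: "n = Suc (Suc p)" using less.prems by (metis One_nat_def Suc_le_D le_antisym not_less_eq_eq)
    obtain M where M: "N = Suc M" using less.prems n by (cases N) auto
    have pM: "Suc p \<le> M" using less.prems n M by simp
    have r1: "TT s q n N (N + n) = (q ^ (N + Suc p) - q ^ N) * TT s q (Suc p) N (N + Suc p)
        + s * q ^ (N + p) * TT s q (Suc p) N (N + p)"
      using R1[of "Suc p" "N + n" N s q] less.prems n by simp
    have ih: "TT s q (Suc p) N (N + Suc p) = s * q ^ (N + p - 1) * TT s q p M (N + p - 1)"
      using less.IH[of "Suc p" N] less.prems n M by simp
    have d: "TT s q (Suc p) N (N + p) - TT s q (Suc p) M (N + p) = - (q ^ Suc p - 1) * q ^ M * TT s q p M (N + p - 1)"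
      using Dlem[OF q pM, of s "N + p"] M by simp
    define X where "X = TT s q p M (N + p - 1)"
    have T2: "TT s q (Suc p) N (N + p) = TT s q (Suc p) M (N + p) - (q ^ Suc p - 1) * q ^ M * X"
      using d unfolding X_def by (simp add: algebra_simps)
    have e1: "N + p - 1 = M + p" "N + n - 2 = N + p" "n - 1 = Suc p" "N - 1 = M" using M n by auto
    have "TT s q n N (N + n) = (q ^ (N + Suc p) - q ^ N) * (s * q ^ (M + p) * X)
        + s * q ^ (N + p) * (TT s q (Suc p) M (N + p) - (q ^ Suc p - 1) * q ^ M * X)"
      unfolding r1 ih T2 e1(1) X_def ..
    also have "\<dots> = s * q ^ (N + p) * TT s q (Suc p) M (N + p)"
      unfolding M by (simp add: power_add algebra_simps)
    finally show ?thesis unfolding e1 .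
  qed
qed


lemma Main:
  assumes q: "q \<noteq> -1"
  shows "TT s q n (n + m) (n + m + n) = q ^ (n^2 - n + m*n) * s ^ n * uu s q m"
proof (induction n)
  case 0 then show ?case by (simp add: TT_0)
next
  case (Suc n)
  have "TT s q (Suc n) (Suc n + m) (Suc n + m + Suc n)
      = s * q ^ (Suc n + m + Suc n - 2) * TT s q (Suc n - 1) (Suc n + m - 1) (Suc n + m + Suc n - 2)"
    by (rule Claim[OF q]) auto
  also have "\<dots> = s * q ^ (n + m + n) * TT s q n (n + m) (n + m + n)" by simp
  also have "\<dots> = s * q ^ (n + m + n) * (q ^ (n^2 - n + m*n) * s ^ n * uu s q m)"
    using Suc.IH by simp
  also have "\<dots> = q ^ ((n + m + n) + (n^2 - n + m*n)) * s ^ Suc n * uu s q m"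
    by (simp add: power_add algebra_simps)
  also have "(n + m + n) + (n^2 - n + m*n) = (Suc n)^2 - Suc n + m * Suc n"
  proof -
    have "n \<le> n * n" by (rule le_square)
    then have h: "n \<le> n * n" .
    show ?thesis
      apply (simp add: power2_eq_square algebra_simps)
      apply (insert h)
      apply arith
      done
  qed
  finally show ?case .
qed

lemma prod_reindex_top:
  fixes k N :: nat
  shows "k \<le> N \<Longrightarrow> (\<Prod>j=N+1-k..N. f j) = (\<Prod>i<k. f (N - i))"
proof (induction k)
  case 0 then show ?case by simp
next
  case (Suc k)
  have set: "{N + 1 - Suc k..N} = insert (N - k) {N + 1 - k..N}" using Suc.prems by auto
  have "(N - k) \<notin> {N + 1 - k..N}" using Suc.prems by auto
  then have "(\<Prod>j=N+1-Suc k..N. f j) = f (N - k) * (\<Prod>j=N+1-k..N. f j)"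
    unfolding set by simp
  then show ?case using Suc by (simp add: mult.commute)
qed

theorem theorem3p4:
  fixes q s :: real and n m :: nat
  assumes "q \<noteq> -1"
  shows "(\<Sum>k=0..n. (-1) ^ k * q ^ (k choose 2) * qbinom q n k
            * (\<Prod>j=n+m+1-k..n+m. 1 + q ^ j)
            * U (int (2*n+m) - 1 - int k) 1 s q)
         = q ^ (n^2 - n + m*n) * s ^ n * U (int m - 1) 1 s q"
proof -
  have "(\<Sum>k=0..n. (-1) ^ k * q ^ (k choose 2) * qbinom q n k
            * (\<Prod>j=n+m+1-k..n+m. 1 + q ^ j)
            * U (int (2*n+m) - 1 - int k) 1 s q) = TT s q n (n + m) (n + m + n)"
    unfolding TT_def atLeast0AtMost
  proof (rule sum.cong)
    fix k assume "k \<in> {..n}"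
    then have k: "k \<le> n" by simp
    have a: "qbinom q n k = gb q n k" using qbinom_gb[OF assms k] .
    have b: "(\<Prod>j=n+m+1-k..n+m. 1 + q ^ j) = PP q (n + m) k"
      unfolding PP_def using prod_reindex_top[of k "n + m" "\<lambda>j. 1 + q ^ j"] k by simp
    have c: "U (int (2*n+m) - 1 - int k) 1 s q = uu s q (n + m + n - k)"
    proof -
      have h1: "int (2*n+m) - 1 - int k + 1 = int (n + m + n - k)" using k by simp
      have h2: "nat (int (2*n+m) - 1 - int k + 1) = n + m + n - k" by (simp only: h1 nat_int)
      have h3: "\<not> (int (2*n+m) - 1 - int k < -1)" using k by simp
      show ?thesis unfolding U_def uu_def if_not_P[OF h3] h2 ..
    qed
    show "(-1) ^ k * q ^ (k choose 2) * qbinom q n k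
            * (\<Prod>j=n+m+1-k..n+m. 1 + q ^ j)
            * U (int (2*n+m) - 1 - int k) 1 s q
        = (-1) ^ k * q ^ (k choose 2) * gb q n k * PP q (n + m) k * uu s q (n + m + n - k)"
      unfolding a b c ..
  qed simp
  also have "\<dots> = q ^ (n^2 - n + m*n) * s ^ n * uu s q m" by (rule Main[OF assms])
  also have "uu s q m = U (int m - 1) 1 s q" by (simp add: U_def uu_def)
  finally show ?thesis .
qed

end
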